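(* Let $n\geq 1$ and let $F:\mathbb C^n\to\mathbb C^n$ be a biholomorphic map. Then $F$ is affine (i.e. $F(z)=F(0)+DF(0)z$ for all $z$) if and only if the function $$z\mapsto \log\left(\frac{\|DF(0)^{-1}(F(z)-F(0))\|}{\|z\|}\right)$$ is pluriharmonic on $\mathbb C^n\setminus\{0\}$.
   Context: $\|\cdot\|$ is the standard Hermitian norm on $\mathbb C^n$. A real-valued $C^2$ function $g$ on an open subset of $\mathbb C^n$ is pluriharmonic if its Levi matrix $\big(\partial^2 g/\partial z_i\partial\bar z_j\big)$ vanishes identically. *)

theory Defs
  imports "HOL-Analysis.Analysis"
begin

definition complex_linear :: "(complex^'n \<Rightarrow> complex^'m) \<Rightarrow> bool" where
  "complex_linear L \<longleftrightarrow> linear L \<and> (\<forall>(c::complex) x. L (c *s x) = c *s L x)"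

definition holomorphic_vec_on :: "(complex^'n \<Rightarrow> complex^'m) \<Rightarrow> (complex^'n) set \<Rightarrow> bool" where
  "holomorphic_vec_on F S \<longleftrightarrow>
     (\<forall>z\<in>S. \<exists>L. (F has_derivative L) (at z) \<and> complex_linear L)"

definition biholomorphic :: "(complex^'n \<Rightarrow> complex^'n) \<Rightarrow> bool" where
  "biholomorphic F \<longleftrightarrow> bij F \<and> holomorphic_vec_on F UNIV \<and> holomorphic_vec_on (inv F) UNIV"

definition wirt_dz :: "'n \<Rightarrow> (complex^'n \<Rightarrow> complex) \<Rightarrow> complex^'n \<Rightarrow> complex" where
  "wirt_dz i f z = (frechet_derivative f (at z) (axis i 1)
                    - \<i> * frechet_derivative f (at z) (axis i \<i>)) / 2"

definition wirt_dzbar :: "'n \<Rightarrow> (complex^'n \<Rightarrow> complex) \<Rightarrow> complex^'n \<Rightarrow> complex" where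
  "wirt_dzbar i f z = (frechet_derivative f (at z) (axis i 1)
                    + \<i> * frechet_derivative f (at z) (axis i \<i>)) / 2"

definition levi_entry :: "(complex^'n \<Rightarrow> real) \<Rightarrow> complex^'n \<Rightarrow> 'n \<Rightarrow> 'n \<Rightarrow> complex" where
  "levi_entry g z i j = wirt_dz i (wirt_dzbar j (\<lambda>w. complex_of_real (g w))) z"

definition C2_on :: "(complex^'n) set \<Rightarrow> (complex^'n \<Rightarrow> real) \<Rightarrow> bool" where
  "C2_on U g \<longleftrightarrow>
     (\<forall>z\<in>U. g differentiable (at z)) \<and>
     (\<forall>v. \<forall>z\<in>U. (\<lambda>w. frechet_derivative g (at w) v) differentiable (at z)) \<and>
     (\<forall>v u. continuous_on U
        (\<lambda>z. frechet_derivative (\<lambda>w. frechet_derivative g (at w) v) (at z) u))"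

definition pluriharmonic_on :: "(complex^'n) set \<Rightarrow> (complex^'n \<Rightarrow> real) \<Rightarrow> bool" where
  "pluriharmonic_on U g \<longleftrightarrow> open U \<and> C2_on U g \<and>
     (\<forall>z\<in>U. \<forall>i j. levi_entry g z i j = 0)"

end

theory Submission imports Defs "HOL-Complex_Analysis.Complex_Analysis" begin
no_notation fps_nth (infixl "$" 75)

lemma vec_decomp:
  fixes v :: "complex^'n"
  shows "v = (\<Sum>i\<in>UNIV. Re (v$i) *\<^sub>R axis i 1 + Im (v$i) *\<^sub>R axis i \<i>)"
  by (simp add: vec_eq_iff axis_def complex_eq_iff if_distrib cong: if_cong)

lemma ivec_decomp:
  fixes v :: "complex^'n"
  shows "\<i> *s v = (\<Sum>i\<in>UNIV. Re (v$i) *\<^sub>R axis i \<i> - Im (v$i) *\<^sub>R axis i 1)"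
  by (simp add: vec_eq_iff axis_def complex_eq_iff if_distrib cong: if_cong)

lemma bilin_expand:
  fixes A :: "complex^'n \<Rightarrow> complex^'n \<Rightarrow> real"
  assumes l1: "\<And>w. linear (\<lambda>u. A u w)" and l2: "\<And>u. linear (A u)"
    and z1: "\<And>i j. A (axis i 1) (axis j 1) + A (axis i \<i>) (axis j \<i>) = 0"
    and z2: "\<And>i j. A (axis i 1) (axis j \<i>) - A (axis i \<i>) (axis j 1) = 0"
  shows "A v v + A (\<i> *s v) (\<i> *s v) = 0"
proof -
  define a where "a i = Re (v$i)" for i
  define b where "b i = Im (v$i)" for i
  define x where "x i = a i *\<^sub>R axis i (1::complex) + b i *\<^sub>R axis i \<i>" for i
  define y where "y i = a i *\<^sub>R axis i \<i> - b i *\<^sub>R axis i (1::complex)" for i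
  have sumexp: "A (\<Sum>i\<in>UNIV. f i) (\<Sum>j\<in>UNIV. h j) = (\<Sum>i\<in>UNIV. \<Sum>j\<in>UNIV. A (f i) (h j))"
    for f h :: "'n \<Rightarrow> complex^'n"
  proof -
    have "A (sum f UNIV) w = (\<Sum>i\<in>UNIV. A (f i) w)" for w
      using real_vector.linear_sum[OF l1[of w]] by simp
    moreover have "A u (sum h UNIV) = (\<Sum>j\<in>UNIV. A u (h j))" for u
      using real_vector.linear_sum[OF l2[of u]] by simp
    ultimately show ?thesis using sum.swap by simp
  qed
  have v1: "v = (\<Sum>i\<in>UNIV. x i)" unfolding x_def a_def b_def by (rule vec_decomp)
  have v2: "\<i> *s v = (\<Sum>i\<in>UNIV. y i)" unfolding y_def a_def b_def by (rule ivec_decomp)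
  have term0: "A (x i) (x j) + A (y i) (y j) = 0" for i j
  proof -
    have L: "A (p *\<^sub>R u1 + q *\<^sub>R u2) w = p * A u1 w + q * A u2 w" for p q u1 u2 w
      using real_vector.linear_add[OF l1] linear_cmul[OF l1] by simp
    have L': "A (p *\<^sub>R u1 - q *\<^sub>R u2) w = p * A u1 w - q * A u2 w" for p q u1 u2 w
      using real_vector.linear_diff[OF l1] linear_cmul[OF l1] by simp
    have R: "A w (p *\<^sub>R u1 + q *\<^sub>R u2) = p * A w u1 + q * A w u2" for p q u1 u2 w
      using real_vector.linear_add[OF l2] linear_cmul[OF l2] by simp
    have R': "A w (p *\<^sub>R u1 - q *\<^sub>R u2) = p * A w u1 - q * A w u2" for p q u1 u2 w
      using real_vector.linear_diff[OF l2] linear_cmul[OF l2] by simp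
    have e1: "A (axis i \<i>) (axis j \<i>) = - A (axis i 1) (axis j 1)" using z1[of i j] by linarith
    have e2: "A (axis i \<i>) (axis j 1) = A (axis i 1) (axis j \<i>)" using z2[of i j] by linarith
    show ?thesis unfolding x_def y_def L L' R R' e1 e2 by (simp add: algebra_simps)
  qed
  have "A v v + A (\<i> *s v) (\<i> *s v) = (\<Sum>i\<in>UNIV. \<Sum>j\<in>UNIV. A (x i) (x j) + A (y i) (y j))"
    by (subst v2, subst v2, subst v1, subst v1, simp only: sumexp sum.distrib)
  also have "\<dots> = 0" using term0 by simp
  finally show ?thesis .
qed

lemma levi_line:
  fixes g :: "complex^'n \<Rightarrow> real"
  assumes ph: "pluriharmonic_on U g" and zU: "z \<in> U"
  shows "frechet_derivative (\<lambda>y. frechet_derivative g (at y) v) (at z) v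
       + frechet_derivative (\<lambda>y. frechet_derivative g (at y) (\<i> *s v)) (at z) (\<i> *s v) = 0"
proof -
  define Dg where "Dg y = frechet_derivative g (at y)" for y
  define A where "A u w = frechet_derivative (\<lambda>y. Dg y w) (at z) u" for u w
  have oU: "open U" and C2: "C2_on U g" and lz: "\<And>i j. levi_entry g z i j = 0"
    using ph zU unfolding pluriharmonic_on_def by auto
  have gd: "(g has_derivative Dg y) (at y)" if "y \<in> U" for y
    using C2 that unfolding C2_on_def Dg_def by (simp add: frechet_derivative_works)
  have linD: "linear (Dg y)" if "y \<in> U" for y using gd[OF that] has_derivative_linear by blast
  have hd: "((\<lambda>y. Dg y w) has_derivative (\<lambda>u. A u w)) (at z)" for w
    using C2 zU unfolding C2_on_def Dg_def A_def by (simp add: frechet_derivative_works)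
  have l1: "linear (\<lambda>u. A u w)" for w using hd has_derivative_linear by blast
  have addw: "A u (w1 + w2) = A u w1 + A u w2" for u w1 w2
  proof -
    have "((\<lambda>y. Dg y w1 + Dg y w2) has_derivative (\<lambda>u. A u w1 + A u w2)) (at z)"
      by (intro has_derivative_add hd)
    then have "((\<lambda>y. Dg y (w1 + w2)) has_derivative (\<lambda>u. A u w1 + A u w2)) (at z)"
      by (rule has_derivative_transform_within_open[OF _ oU zU])
         (simp add: real_vector.linear_add[OF linD])
    then show ?thesis using hd[of "w1+w2"] has_derivative_unique by metis
  qed
  have scw: "A u (c *\<^sub>R w) = c *\<^sub>R A u w" for u c w
  proof -
    have "((\<lambda>y. c *\<^sub>R Dg y w) has_derivative (\<lambda>u. c *\<^sub>R A u w)) (at z)"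
      by (intro has_derivative_scaleR_right hd)
    then have "((\<lambda>y. Dg y (c *\<^sub>R w)) has_derivative (\<lambda>u. c *\<^sub>R A u w)) (at z)"
      by (rule has_derivative_transform_within_open[OF _ oU zU])
         (simp add: linear_cmul[OF linD])
    then show ?thesis using hd[of "c *\<^sub>R w"] has_derivative_unique by metis
  qed
  have l2: "linear (A u)" for u by (rule linearI) (simp_all add: addw scw)
  have fcor: "frechet_derivative (\<lambda>w. complex_of_real (g w)) (at y) = (\<lambda>x. complex_of_real (Dg y x))"
    if "y \<in> U" for y
    by (rule frechet_derivative_at[symmetric], rule has_derivative_of_real, rule gd[OF that])
  have wbar: "wirt_dzbar j (\<lambda>w. complex_of_real (g w)) y
      = (complex_of_real (Dg y (axis j 1)) + \<i> * complex_of_real (Dg y (axis j \<i>))) / 2"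
    if "y \<in> U" for y j
    unfolding wirt_dzbar_def fcor[OF that] ..
  have levi: "levi_entry g z i j = ((complex_of_real (A (axis i 1) (axis j 1)) + \<i> * complex_of_real (A (axis i 1) (axis j \<i>)))
      - \<i> * (complex_of_real (A (axis i \<i>) (axis j 1)) + \<i> * complex_of_real (A (axis i \<i>) (axis j \<i>)))) / 4" for i j
  proof -
    have "((\<lambda>y. (complex_of_real (Dg y (axis j 1)) + \<i> * complex_of_real (Dg y (axis j \<i>))) / 2) has_derivative
       (\<lambda>u. (complex_of_real (A u (axis j 1)) + \<i> * complex_of_real (A u (axis j \<i>))) / 2)) (at z)"
      by (rule derivative_eq_intros hd refl | simp)+
    then have "((\<lambda>y. wirt_dzbar j (\<lambda>w. complex_of_real (g w)) y) has_derivative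
       (\<lambda>u. (complex_of_real (A u (axis j 1)) + \<i> * complex_of_real (A u (axis j \<i>))) / 2)) (at z)"
      by (rule has_derivative_transform_within_open[OF _ oU zU]) (simp add: wbar)
    then have "frechet_derivative (wirt_dzbar j (\<lambda>w. complex_of_real (g w))) (at z) =
       (\<lambda>u. (complex_of_real (A u (axis j 1)) + \<i> * complex_of_real (A u (axis j \<i>))) / 2)"
      by (metis (no_types) frechet_derivative_at)
    then show ?thesis unfolding levi_entry_def wirt_dz_def by (simp add: field_simps)
  qed
  have z1: "A (axis i 1) (axis j 1) + A (axis i \<i>) (axis j \<i>) = 0"
   and z2: "A (axis i 1) (axis j \<i>) - A (axis i \<i>) (axis j 1) = 0" for i j
    using lz[of i j] unfolding levi by (simp_all add: complex_eq_iff)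
  show ?thesis using bilin_expand[OF l1 l2 z1 z2, of v] unfolding A_def Dg_def .
qed

lemma entire_inj_id:
  fixes f :: "complex \<Rightarrow> complex"
  assumes hol: "f holomorphic_on UNIV" and injf: "inj f"
    and prp: "\<And>K. compact K \<Longrightarrow> compact {z. f z \<in> K}"
    and f0: "f 0 = 0" and d0: "deriv f 0 = 1"
  shows "f z = z"
proof -
  obtain c n where n0: "0 < n" and cn: "c n \<noteq> 0" and fe: "f = (\<lambda>z. \<Sum>i\<le>n. c i * z^i)"
    using proper_map_polyfun_eq[OF hol] prp by blast
  have reg: "deriv f z \<noteq> 0" for z
    using holomorphic_injective_imp_regular[OF hol open_UNIV] injf by auto
  have fd: "(f has_field_derivative (\<Sum>i\<le>n. of_nat i * z^(i - Suc 0) * c i)) (at z)" for z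
    unfolding fe by (rule derivative_eq_intros refl | simp)+
  have df: "deriv f z = (\<Sum>i\<le>n. of_nat i * z^(i - Suc 0) * c i)" for z
    using fd DERIV_imp_deriv by blast
  have n1: "n = 1"
  proof (rule ccontr)
    assume "n \<noteq> 1"
    with n0 obtain m where m: "n = Suc m" "1 \<le> m" by (cases n) auto
    define a where "a j = of_nat (Suc j) * c (Suc j)" for j
    have eq: "deriv f z = (\<Sum>j\<le>m. a j * z^j)" for z
      unfolding df m(1) sum.atMost_Suc_shift a_def by (simp add: mult_ac)
    have "a m \<noteq> 0" unfolding a_def using cn m(1) by (metis mult_eq_0_iff of_nat_eq_0_iff nat.distinct(1))
    then have ex: "\<exists>i\<in>{1..m}. a i \<noteq> 0" using m(2) by auto
    obtain z where "(\<Sum>j\<le>m. a j * z^j) = 0"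
      using fundamental_theorem_of_algebra[of a m, OF disjI2[OF ex]] by blast
    with eq reg show False by metis
  qed
  have "f 0 = c 0" using fe n1 by simp
  moreover have "deriv f 0 = c 1" using df n1 by simp
  ultimately show ?thesis using fe n1 f0 d0 by simp
qed

lemma normsq_vec: "(norm (x::complex^'n))^2 = (\<Sum>k\<in>UNIV. (cmod (x$k))^2)"
  unfolding norm_vec_def L2_set_def by (simp add: sum_nonneg)

lemma norm_smult_vec: "norm (c *s (x::complex^'n)) = cmod c * norm x"
proof -
  have "(norm (c *s x))^2 = (cmod c * norm x)^2"
    unfolding normsq_vec power_mult_distrib by (simp add: norm_mult power_mult_distrib sum_distrib_left)
  then show ?thesis by (simp add: power2_eq_imp_eq)
qed

lemma bl_smult: "bounded_linear (\<lambda>r::complex. r *s (v::complex^'n))"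
proof -
  have "linear (\<lambda>r::complex. r *s v)"
    by (rule linearI) (simp_all add: vec_eq_iff algebra_simps vector_scaleR_component)
  then show ?thesis by (simp add: linear_conv_bounded_linear)
qed

lemma alg1: fixes r p s :: complex and n X :: real assumes "n > 0" "s \<noteq> 0"
 shows "((Re (r * p + cnj r * cnj p) * inverse n - Re (s * cnj r + r * cnj s) * inverse (Re (s * cnj s))) * 2 - X * 0) / (2 * 2) - 0 = Re (r * (p / of_real n - inverse s))"
proof -
  define d where "d = (Re s)^2 + (Im s)^2"
  have dpos: "d > 0" using assms(2) unfolding d_def
    by (metis complex_eq_0 less_le sum_power2_ge_zero)
  have 1: "Re (r * p + cnj r * cnj p) = 2 * (Re r * Re p - Im r * Im p)" by simp
  have 2: "Re (s * cnj r + r * cnj s) = 2 * (Re r * Re s + Im r * Im s)" by (simp add: algebra_simps)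
  have 3: "Re (s * cnj s) = d" unfolding d_def by (simp add: power2_eq_square)
  have 4: "Re (r * (p / of_real n - inverse s)) = (Re r * Re p - Im r * Im p) / n - (Re r * Re s + Im r * Im s) / d"
    unfolding d_def by (simp add: Re_divide inverse_eq_divide power2_eq_square algebra_simps diff_divide_distrib add_divide_distrib)
  show ?thesis unfolding 1 2 3 4 using dpos assms(1) by (simp add: field_simps)
qed

lemma alg2: fixes P2 M N P s :: complex assumes "N \<noteq> 0" "s \<noteq> 0"
  defines "DQ \<equiv> \<lambda>q. ((q * P2 + cnj q * M) * N - P * (q * P + cnj q * cnj P)) / (N * N) - - (inverse s * q * inverse s)"
  shows "DQ 1 + \<i> * DQ \<i> = 2 * (M * N - P * cnj P) / (N * N)"
  using assms unfolding DQ_def by (simp add: field_simps)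

lemma lagrange: fixes a b :: "'n::finite \<Rightarrow> complex"
  shows "(\<Sum>k\<in>UNIV. \<Sum>l\<in>UNIV. (a k * b l - a l * b k) * cnj (a k * b l - a l * b k))
     = 2 * ((\<Sum>k\<in>UNIV. a k * cnj (a k)) * (\<Sum>k\<in>UNIV. b k * cnj (b k))
        - (\<Sum>k\<in>UNIV. b k * cnj (a k)) * cnj (\<Sum>k\<in>UNIV. b k * cnj (a k)))"
proof -
  have e: "(a k * b l - a l * b k) * cnj (a k * b l - a l * b k) =
     a k * cnj (a k) * (b l * cnj (b l)) + a l * cnj (a l) * (b k * cnj (b k))
     - b k * cnj (a k) * (cnj (b l) * a l) - b l * cnj (a l) * (cnj (b k) * a k)" for k l
    by (simp add: algebra_simps)
  have s1: "(\<Sum>k\<in>UNIV. \<Sum>l\<in>UNIV. a l * cnj (a l) * (b k * cnj (b k))) = (\<Sum>k\<in>UNIV. \<Sum>l\<in>UNIV. a k * cnj (a k) * (b l * cnj (b l)))"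
    by (subst sum.swap) (simp add: mult.commute)
  have s2: "(\<Sum>k\<in>UNIV. \<Sum>l\<in>UNIV. b l * cnj (a l) * (cnj (b k) * a k)) = (\<Sum>k\<in>UNIV. \<Sum>l\<in>UNIV. b k * cnj (a k) * (cnj (b l) * a l))"
    by (subst sum.swap) (simp add: mult.commute)
  show ?thesis
    unfolding e sum_subtractf sum.distrib s1 s2
    apply (simp add: sum_product cnj_sum algebra_simps mult.commute)
    by (subst sum.swap) (simp add: mult_ac)
qed

lemma ratio_lemma:
  fixes a b a' b' :: "complex \<Rightarrow> complex"
  assumes ha: "\<And>t. (a has_field_derivative a' t) (at t)"
    and hb: "\<And>t. (b has_field_derivative b' t) (at t)"
    and a0: "a 0 = 0" and b0: "b 0 = 0" and a'0: "a' 0 = \<alpha>" and anz: "\<alpha> \<noteq> 0" and b'0: "b' 0 = \<beta>"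
    and W: "\<And>t. a t * b' t = b t * a' t"
  shows "b t * \<alpha> = a t * \<beta>"
proof -
  define h where "h y = b y * \<alpha> - a y * \<beta>" for y
  have hd: "(h has_field_derivative (b' y * \<alpha> - a' y * \<beta>)) (at y)" for y
    unfolding h_def by (intro DERIV_diff DERIV_cmult_right ha hb)
  have hol: "h holomorphic_on UNIV" using hd by (auto simp: holomorphic_on_open)
  have la: "((\<lambda>y. a y / y) \<longlongrightarrow> \<alpha>) (at 0)"
    using ha[of 0] unfolding has_field_derivative_iff a0 a'0 by simp
  have lh: "((\<lambda>y. h y / y) \<longlongrightarrow> 0) (at 0)"
    using hd[of 0] unfolding has_field_derivative_iff h_def a0 b0 a'0 b'0 by (simp add: mult.commute)
  have "\<forall>\<^sub>F y in at 0. a y / y \<noteq> 0" by (rule tendsto_imp_eventually_ne[OF la anz])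
  then obtain d where d: "d > 0" and dne: "\<And>y. y \<noteq> 0 \<Longrightarrow> dist y 0 < d \<Longrightarrow> a y / y \<noteq> 0"
    unfolding eventually_at by auto
  define S where "S = ball (0::complex) d - {0}"
  have aS: "a y \<noteq> 0" if "y \<in> S" for y using dne[of y] that unfolding S_def by (auto simp: dist_commute)
  define R where "R y = h y / a y" for y
  have Rd: "(R has_field_derivative 0) (at y)" if "y \<in> S" for y
  proof -
    have "(R has_field_derivative ((b' y * \<alpha> - a' y * \<beta>) * a y - a' y * h y) / (a y ^ Suc (Suc 0))) (at y)"
      unfolding R_def[abs_def] by (rule DERIV_quotient[OF hd ha aS[OF that]])
    moreover have "(b' y * \<alpha> - a' y * \<beta>) * a y - a' y * h y = \<alpha> * (a y * b' y - b y * a' y)"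
      unfolding h_def by (simp add: algebra_simps)
    ultimately show ?thesis using W[of y] by simp
  qed
  have oS: "open S" unfolding S_def by auto
  have cS: "connected S" unfolding S_def by (rule connected_punctured_ball) simp
  have contR: "continuous_on S R"
    using Rd DERIV_isCont by (blast intro: continuous_at_imp_continuous_on)
  obtain c where Rc: "\<And>y. y \<in> S \<Longrightarrow> R y = c"
    using DERIV_zero_connected_constant[OF cS oS finite.emptyI contR] Rd by blast
  have ev: "\<forall>\<^sub>F y in at 0. c * (a y / y) = h y / y"
  proof -
    have "\<forall>\<^sub>F y in at (0::complex). y \<in> S"
      unfolding S_def eventually_at using d by (auto simp: dist_commute intro!: exI[of _ d])
    then show ?thesis
      by eventually_elim (use Rc aS in \<open>auto simp: R_def field_simps\<close>)
  qed
  have "((\<lambda>y. c * (a y / y)) \<longlongrightarrow> c * \<alpha>) (at 0)" by (intro tendsto_intros la)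
  moreover have "((\<lambda>y. c * (a y / y)) \<longlongrightarrow> 0) (at 0)"
    by (rule Lim_transform_eventually[OF lh]) (use ev in \<open>auto elim: eventually_mono\<close>)
  ultimately have "c * \<alpha> = 0" using tendsto_unique at_neq_bot by blast
  then have c0: "c = 0" using anz by simp
  have hS: "h y = 0" if "y \<in> S" for y using Rc[OF that] aS[OF that] c0 unfolding R_def by simp
  have lim: "0 islimpt S" unfolding S_def using d islimpt_punctured[of 0 "ball 0 d"] islimpt_ball[of 0 0 d] by (simp del: islimpt_ball) blast
  have "h t = 0"
    by (rule analytic_continuation[OF hol open_UNIV connected_UNIV subset_UNIV UNIV_I lim hS UNIV_I])
  then show ?thesis unfolding h_def by simp
qed

lemma main_G:
  fixes G :: "complex^'n \<Rightarrow> complex^'n" and DG :: "complex^'n \<Rightarrow> complex^'n \<Rightarrow> complex^'n"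
  assumes hd: "\<And>z. (G has_derivative DG z) (at z)"
    and cl: "\<And>z. complex_linear (DG z)"
    and D0: "DG 0 = (\<lambda>x. x)"
    and G0: "G 0 = 0" and injG: "inj G"
    and bdd: "\<And>K. compact K \<Longrightarrow> bounded (G -` K)"
    and ph: "pluriharmonic_on (UNIV - {0}) (\<lambda>z. ln (norm (G z) / norm z))"
  shows "G v = v"
proof (cases "v = 0")
  case True then show ?thesis using G0 by simp
next
  case vnz: False
  define \<gamma> where "\<gamma> t = G (t *s v)" for t
  define gk where "gk k t = \<gamma> t $ k" for k t
  define dk where "dk k t = DG (t *s v) v $ k" for k t
  have sl: "((\<lambda>t::complex. t *s v) has_derivative (\<lambda>r. r *s v)) F" for F
    by (rule bounded_linear_imp_has_derivative[OF bl_smult])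
  have \<gamma>d: "(\<gamma> has_derivative (\<lambda>r. r *s DG (t *s v) v)) (at t)" for t
  proof -
    have "(\<gamma> has_derivative (\<lambda>r. DG (t *s v) (r *s v))) (at t)"
      unfolding \<gamma>_def by (rule has_derivative_compose[OF sl hd])
    then show ?thesis using cl unfolding complex_linear_def by simp
  qed
  have gkd: "(gk k has_field_derivative dk k t) (at t)" for k t
  proof -
    have "((\<lambda>t. \<gamma> t $ k) has_derivative (\<lambda>r. (r *s DG (t *s v) v) $ k)) (at t)"
      by (rule bounded_linear.has_derivative[OF bounded_linear_vec_nth \<gamma>d])
    moreover have "(\<lambda>r. (r *s DG (t *s v) v) $ k) = (*) (dk k t)"
      by (auto simp: dk_def mult.commute)
    ultimately show ?thesis unfolding has_field_derivative_def gk_def by simp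
  qed
  have hol_gk: "gk k holomorphic_on UNIV" for k
    using gkd by (auto simp: holomorphic_on_open)
  have deriv_gk: "deriv (gk k) = dk k" for k
    using gkd DERIV_imp_deriv by blast
  have hol_dk: "dk k holomorphic_on UNIV" for k
    using holomorphic_deriv[OF hol_gk open_UNIV] deriv_gk by metis
  define d2 where "d2 k t = deriv (dk k) t" for k t
  have dkd: "(dk k has_field_derivative d2 k t) (at t)" for k t
    unfolding d2_def using holomorphic_derivI[OF hol_dk open_UNIV] by blast
  define N where "N t = (\<Sum>k\<in>UNIV. gk k t * cnj (gk k t))" for t
  define P where "P t = (\<Sum>k\<in>UNIV. dk k t * cnj (gk k t))" for t
  define M where "M t = (\<Sum>k\<in>UNIV. dk k t * cnj (dk k t))" for t
  define P2 where "P2 t = (\<Sum>k\<in>UNIV. d2 k t * cnj (gk k t))" for t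
  define Nr where "Nr t = (norm (\<gamma> t))^2" for t
  define Mr where "Mr t = (\<Sum>k\<in>UNIV. (cmod (dk k t))^2)" for t
  have NNr: "N t = of_real (Nr t)" for t
    unfolding N_def Nr_def normsq_vec gk_def of_real_sum complex_norm_square ..
  have MMr: "M t = of_real (Mr t)" for t
    unfolding M_def Mr_def of_real_sum complex_norm_square ..
  have Npos: "Nr t > 0" if "t \<noteq> 0" for t
  proof -
    have "t *s v \<noteq> 0" using that vnz by (simp add: vec_eq_iff)
    then have "\<gamma> t \<noteq> 0" unfolding \<gamma>_def using injG G0 by (metis injD)
    then show ?thesis unfolding Nr_def by simp
  qed
  have Nd: "(N has_derivative (\<lambda>r. r * P t + cnj r * cnj (P t))) (at t)" for t
  proof -
    have "(N has_derivative (\<lambda>r. \<Sum>k\<in>UNIV. gk k t * cnj (dk k t * r) + dk k t * r * cnj (gk k t))) (at t)"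
      unfolding N_def
      by (intro has_derivative_sum has_derivative_mult has_derivative_cnj
           gkd[unfolded has_field_derivative_def])
    moreover have "(\<lambda>r. \<Sum>k\<in>UNIV. gk k t * cnj (dk k t * r) + dk k t * r * cnj (gk k t))
        = (\<lambda>r. r * P t + cnj r * cnj (P t))"
      unfolding P_def by (auto simp: sum.distrib sum_distrib_left cnj_sum algebra_simps)
    ultimately show ?thesis by simp
  qed
  have Pd: "(P has_derivative (\<lambda>r. r * P2 t + cnj r * M t)) (at t)" for t
  proof -
    have "(P has_derivative (\<lambda>r. \<Sum>k\<in>UNIV. dk k t * cnj (dk k t * r) + d2 k t * r * cnj (gk k t))) (at t)"
      unfolding P_def
      by (intro has_derivative_sum has_derivative_mult has_derivative_cnj
           gkd[unfolded has_field_derivative_def] dkd[unfolded has_field_derivative_def])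
    moreover have "(\<lambda>r. \<Sum>k\<in>UNIV. dk k t * cnj (dk k t * r) + d2 k t * r * cnj (gk k t))
        = (\<lambda>r. r * P2 t + cnj r * M t)"
      unfolding P2_def M_def by (auto simp: sum.distrib sum_distrib_left cnj_sum algebra_simps)
    ultimately show ?thesis by simp
  qed
  define g where "g z = ln (norm (G z) / norm z)" for z
  define Dg where "Dg z = frechet_derivative g (at z)" for z
  define A where "A z u w = frechet_derivative (\<lambda>y. Dg y w) (at z) u" for z u w
  have C2: "C2_on (UNIV - {0}) g" using ph unfolding pluriharmonic_on_def g_def by auto
  have gd: "(g has_derivative Dg z) (at z)" if "z \<noteq> 0" for z
    using C2 that unfolding C2_on_def Dg_def by (simp add: frechet_derivative_works)
  have hwd: "((\<lambda>y. Dg y w) has_derivative (\<lambda>u. A z u w)) (at z)" if "z \<noteq> 0" for z w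
    using C2 that unfolding C2_on_def Dg_def A_def by (simp add: frechet_derivative_works)
  define Q where "Q s = P s / N s - inverse s" for s
  have sv: "s *s v \<noteq> 0" if "s \<noteq> 0" for s using that vnz by (simp add: vec_eq_iff)
  have DgQ: "Dg (s *s v) (r *s v) = Re (r * Q s)" if snz: "s \<noteq> 0" for s r
  proof -
    have d1: "((\<lambda>s. g (s *s v)) has_derivative (\<lambda>r. Dg (s *s v) (r *s v))) (at s)"
      by (rule has_derivative_compose[OF sl gd[OF sv[OF snz]]])
    define \<phi> where "\<phi> s = (ln (Re (N s)) - ln (Re (s * cnj s))) / 2 - ln (norm v)" for s
    have eqphi: "g (s' *s v) = \<phi> s'" if "s' \<in> UNIV - {0}" for s'
    proof -
      have s'nz: "s' \<noteq> 0" using that by simp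
      have "norm (\<gamma> s') > 0" using Npos[OF s'nz] unfolding Nr_def by simp
      then have "g (s' *s v) = ln (norm (\<gamma> s')) - ln (cmod s') - ln (norm v)"
        unfolding g_def \<gamma>_def[symmetric] norm_smult_vec using s'nz vnz
        by (simp add: ln_div ln_mult)
      moreover have "ln (Re (N s')) = 2 * ln (norm (\<gamma> s'))"
        using \<open>norm (\<gamma> s') > 0\<close> unfolding NNr Nr_def by (simp add: ln_realpow)
      moreover have "ln (Re (s' * cnj s')) = 2 * ln (cmod s')"
      proof -
        have "Re (s' * cnj s') = (cmod s')^2"
          by (subst complex_norm_square[symmetric]) (simp only: Re_complex_of_real)
        then show ?thesis using s'nz by (simp add: ln_realpow)
      qed
      ultimately show ?thesis unfolding \<phi>_def by simp
    qed
    have d2': "(\<phi> has_derivative (\<lambda>r. ((Re (r * P s + cnj r * cnj (P s)) * inverse (Re (N s))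
            - Re (s * cnj r + r * cnj s) * inverse (Re (s * cnj s))) * 2 - ((ln (Re (N s)) - ln (Re (s * cnj s)))) * 0) / (2 * 2) - 0)) (at s)"
    proof -
      have Nsp: "Re (N s) > 0" using Npos[OF snz] NNr by simp
      have ssp: "Re (s * cnj s) > 0"
      proof -
        have "Re (s * cnj s) = (cmod s)^2"
          by (subst complex_norm_square[symmetric]) (simp only: Re_complex_of_real)
        then show ?thesis using snz by simp
      qed
      have h1: "((\<lambda>s. ln (Re (N s))) has_derivative (\<lambda>r. Re (r * P s + cnj r * cnj (P s)) * inverse (Re (N s)))) (at s)"
        by (rule has_derivative_ln[OF Nsp has_derivative_Re[OF Nd]])
      have h2: "((\<lambda>s. ln (Re (s * cnj s))) has_derivative (\<lambda>r. Re (s * cnj r + r * cnj s) * inverse (Re (s * cnj s)))) (at s)"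
        by (rule has_derivative_ln[OF ssp has_derivative_Re[OF has_derivative_mult[OF has_derivative_ident has_derivative_cnj[OF has_derivative_ident]]]])
      show ?thesis unfolding \<phi>_def
        by (intro has_derivative_diff has_derivative_divide' h1 h2 has_derivative_const) simp
    qed
    have d3: "((\<lambda>s. g (s *s v)) has_derivative (\<lambda>r. ((Re (r * P s + cnj r * cnj (P s)) * inverse (Re (N s))
            - Re (s * cnj r + r * cnj s) * inverse (Re (s * cnj s))) * 2 - ((ln (Re (N s)) - ln (Re (s * cnj s)))) * 0) / (2 * 2) - 0)) (at s)"
      by (rule has_derivative_transform_within_open[OF d2' open_delete[OF open_UNIV] _ eqphi[symmetric]])
         (use snz in auto)
    have "(\<lambda>r. Dg (s *s v) (r *s v)) = (\<lambda>r. ((Re (r * P s + cnj r * cnj (P s)) * inverse (Re (N s))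
            - Re (s * cnj r + r * cnj s) * inverse (Re (s * cnj s))) * 2 - ((ln (Re (N s)) - ln (Re (s * cnj s)))) * 0) / (2 * 2) - 0)"
      by (rule has_derivative_unique[OF d1 d3])
    then have "Dg (s *s v) (r *s v) = ((Re (r * P s + cnj r * cnj (P s)) * inverse (Re (N s))
            - Re (s * cnj r + r * cnj s) * inverse (Re (s * cnj s))) * 2 - ((ln (Re (N s)) - ln (Re (s * cnj s)))) * 0) / (2 * 2) - 0"
      by meson
    also have "\<dots> = Re (r * (P s / of_real (Re (N s)) - inverse s))"
      by (rule alg1) (use Npos[OF snz] NNr snz in auto)
    finally show ?thesis unfolding Q_def using NNr by simp
  qed
  have Nnz: "N s \<noteq> 0" if "s \<noteq> 0" for s using Npos[OF that] NNr by simp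
  define DQ where "DQ s = (\<lambda>q. ((q * P2 s + cnj q * M s) * N s - P s * (q * P s + cnj q * cnj (P s))) / (N s * N s)
     - - (inverse s * q * inverse s))" for s
  have Qeq: "Q = (\<lambda>s. P s / N s - inverse s)" by (rule ext) (simp add: Q_def)
  have Qd: "(Q has_derivative DQ s) (at s)" if snz: "s \<noteq> 0" for s
    unfolding Qeq DQ_def
    by (rule has_derivative_diff[OF has_derivative_divide'[OF Pd Nd Nnz[OF snz]] has_derivative_inverse'[OF snz]])
  have AQ: "A (s *s v) (q *s v) (r *s v) = Re (r * DQ s q)" if snz: "s \<noteq> 0" for s q r
  proof -
    have d1: "((\<lambda>s. Dg (s *s v) (r *s v)) has_derivative (\<lambda>q. A (s *s v) (q *s v) (r *s v))) (at s)"
      by (rule has_derivative_compose[OF sl hwd[OF sv[OF snz]]])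
    have d2: "((\<lambda>s. Re (r * Q s)) has_derivative (\<lambda>q. Re (r * DQ s q))) (at s)"
      by (rule has_derivative_Re[OF has_derivative_mult_right[OF Qd[OF snz]]])
    have d3: "((\<lambda>s. Dg (s *s v) (r *s v)) has_derivative (\<lambda>q. Re (r * DQ s q))) (at s)"
      by (rule has_derivative_transform_within_open[OF d2 open_delete[OF open_UNIV]])
         (use snz DgQ in auto)
    show ?thesis using has_derivative_unique[OF d1 d3] by meson
  qed
  have geq: "g = (\<lambda>z. ln (norm (G z) / norm z))" by (rule ext) (simp add: g_def)
  have key: "Mr s * Nr s = (cmod (P s))^2" if snz: "s \<noteq> 0" for s
  proof -
    have "A (s *s v) v v + A (s *s v) (\<i> *s v) (\<i> *s v) = 0"
      using levi_line[OF ph, of "s *s v" v] sv[OF snz] unfolding A_def Dg_def geq by simp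
    then have "A (s *s v) (1 *s v) (1 *s v) + A (s *s v) (\<i> *s v) (\<i> *s v) = 0" by simp
    then have "Re (DQ s 1 + \<i> * DQ s \<i>) = 0" unfolding AQ[OF snz] by simp
    also have "DQ s 1 + \<i> * DQ s \<i> = 2 * (M s * N s - P s * cnj (P s)) / (N s * N s)"
      unfolding DQ_def by (rule alg2[OF Nnz[OF snz] snz])
    also have "\<dots> = of_real (2 * (Mr s * Nr s - (cmod (P s))^2) / (Nr s * Nr s))"
      unfolding NNr MMr complex_norm_square[symmetric] by simp
    finally show ?thesis using Npos[OF snz] by simp
  qed
  have W0: "gk k s * dk l s = gk l s * dk k s" for k l s
  proof (cases "s = 0")
    case True
    then show ?thesis unfolding gk_def \<gamma>_def using G0 by simp
  next
    case snz: False
    define W where "W k l = gk k s * dk l s - gk l s * dk k s" for k l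
    have "(\<Sum>k\<in>UNIV. \<Sum>l\<in>UNIV. W k l * cnj (W k l)) = 2 * (N s * M s - P s * cnj (P s))"
      unfolding W_def N_def M_def P_def by (rule lagrange)
    also have "\<dots> = 0"
      unfolding NNr MMr complex_norm_square[symmetric] using key[OF snz] by (simp add: mult.commute) (metis of_real_mult of_real_power)
    finally have "(\<Sum>k\<in>UNIV. \<Sum>l\<in>UNIV. (cmod (W k l))^2) = 0"
      unfolding complex_norm_square[symmetric] of_real_sum[symmetric] by (simp only: of_real_eq_0_iff)
    then have "\<forall>k\<in>UNIV. (\<Sum>l\<in>UNIV. (cmod (W k l))^2) = 0"
      by (subst (asm) sum_nonneg_eq_0_iff) (auto intro: sum_nonneg)
    then have "(cmod (W k l))^2 = 0"
      by (metis (no_types, lifting) UNIV_I finite zero_le_power2 sum_nonneg_eq_0_iff)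
    then show ?thesis unfolding W_def by simp
  qed
  obtain k where vk: "v$k \<noteq> 0" using vnz by (auto simp: vec_eq_iff)
  have dk0: "dk j 0 = v$j" for j unfolding dk_def using D0 by simp
  have gk0: "gk j 0 = 0" for j unfolding gk_def \<gamma>_def using G0 by simp
  have line: "gk l t * v$k = gk k t * v$l" for l t
    by (rule ratio_lemma[OF gkd gkd gk0 gk0 dk0 vk dk0 W0])
  define f where "f t = gk k t / v$k" for t
  have \<gamma>f: "\<gamma> t = f t *s v" for t
  proof -
    have "\<gamma> t $ l = f t * v $ l" for l
      using line[of l t] vk unfolding f_def gk_def by (simp add: field_simps)
    then show ?thesis by (simp add: vec_eq_iff)
  qed
  have fd: "(f has_field_derivative dk k t / v$k) (at t)" for t
    unfolding f_def[abs_def] by (rule DERIV_cdivide[OF gkd])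
  have holf: "f holomorphic_on UNIV" using fd by (auto simp: holomorphic_on_open)
  have f0: "f 0 = 0" unfolding f_def gk0 by simp
  have df0: "deriv f 0 = 1" using DERIV_imp_deriv[OF fd[of 0]] dk0 vk by simp
  have injf: "inj f"
  proof (rule injI)
    fix a b assume "f a = f b"
    then have "G (a *s v) = G (b *s v)" using \<gamma>f unfolding \<gamma>_def by metis
    then have "a *s v = b *s v" using injG by (meson injD)
    then have "a * v$k = b * v$k" by (metis vector_smult_component)
    then show "a = b" using vk by simp
  qed
  have prp: "compact {z. f z \<in> K}" if cK: "compact K" for K
  proof -
    have contf: "continuous_on UNIV f" using holf holomorphic_on_imp_continuous_on by blast
    have cl: "closed {z. f z \<in> K}"
      using closed_vimage[OF compact_imp_closed[OF cK] contf] by (simp add: vimage_def)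
    define K' where "K' = (\<lambda>c. c *s v) ` K"
    have "compact K'" unfolding K'_def
      by (rule compact_continuous_image[OF linear_continuous_on[OF bl_smult] cK])
    then obtain B where B: "\<And>x. x \<in> G -` K' \<Longrightarrow> norm x \<le> B"
      using bdd bounded_iff by metis
    have "cmod z \<le> B / norm v" if "f z \<in> K" for z
    proof -
      have "G (z *s v) \<in> K'" using that \<gamma>f unfolding K'_def \<gamma>_def by auto
      then have "norm (z *s v) \<le> B" using B by auto
      then show ?thesis using vnz by (simp add: norm_smult_vec field_simps)
    qed
    then have "bounded {z. f z \<in> K}" unfolding bounded_iff by blast
    then show ?thesis using cl by (simp add: compact_eq_bounded_closed)
  qed
  have "f 1 = 1" by (rule entire_inj_id[OF holf injf prp f0 df0])
  then show ?thesis using \<gamma>f[of 1] unfolding \<gamma>_def by simp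
qed

lemma fd_const: "frechet_derivative (\<lambda>w. c) (at x) = (\<lambda>h. 0)"
  by (rule frechet_derivative_at[symmetric, OF has_derivative_const])

lemma pluri_zero: "pluriharmonic_on (UNIV - {0}) (\<lambda>z::complex^'n. 0)"
proof -
  have e1: "(\<lambda>w. frechet_derivative (\<lambda>w::complex^'n. 0::real) (at w) v) = (\<lambda>w. 0)" for v
    by (simp add: fd_const)
  have e2: "(\<lambda>w::complex^'n. complex_of_real 0) = (\<lambda>w. 0)" by simp
  have e3: "wirt_dzbar j (\<lambda>w::complex^'n. 0) = (\<lambda>w. 0)" for j
    by (rule ext) (simp add: wirt_dzbar_def fd_const)
  show ?thesis
    unfolding pluriharmonic_on_def C2_on_def levi_entry_def e1 e2 e3
    by (simp add: fd_const wirt_dz_def open_delete)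
qed

theorem corollary1:
  fixes F :: "complex^'n \<Rightarrow> complex^'n"
  assumes "biholomorphic F"
  shows "(\<forall>z. F z = F 0 + frechet_derivative F (at 0) z) \<longleftrightarrow>
         pluriharmonic_on (UNIV - {0})
           (\<lambda>z. ln (norm (inv (frechet_derivative F (at 0)) (F z - F 0)) / norm z))"
proof -
  define DF where "DF z = frechet_derivative F (at z)" for z
  define L where "L = DF 0"
  have bijF: "bij F" and hF: "holomorphic_vec_on F UNIV" and hI: "holomorphic_vec_on (inv F) UNIV"
    using assms unfolding biholomorphic_def by auto
  have Fd: "(F has_derivative DF z) (at z)" and clF: "complex_linear (DF z)" for z
  proof -
    obtain D where D: "(F has_derivative D) (at z)" "complex_linear D"
      using hF unfolding holomorphic_vec_on_def by blast
    then have "D = DF z" unfolding DF_def using frechet_derivative_at by blast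
    then show "(F has_derivative DF z) (at z)" "complex_linear (DF z)" using D by auto
  qed
  obtain M where Md: "(inv F has_derivative M) (at (F 0))" and clM: "complex_linear M"
    using hI unfolding holomorphic_vec_on_def by blast
  have invFF: "inv F (F x) = x" for x using bijF by (simp add: bij_is_inj)
  have "((\<lambda>x. inv F (F x)) has_derivative (\<lambda>x. M (L x))) (at 0)"
    unfolding L_def by (rule has_derivative_compose[OF Fd Md])
  moreover have "((\<lambda>x. inv F (F x)) has_derivative (\<lambda>x. x)) (at 0)"
    unfolding invFF by (rule has_derivative_ident)
  ultimately have minvl: "M (L x) = x" for x using has_derivative_unique by metis
  have linL: "linear L" unfolding L_def using Fd has_derivative_linear by blast
  have linM: "linear M" using Md has_derivative_linear by blast
  have injL: "inj L" by (metis minvl injI)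
  have surjL: "surj L" by (rule linear_inj_imp_surj[OF linL injL])
  have invL: "inv L = M"
  proof
    fix y obtain x where "y = L x" using surjL by blast
    then show "inv L y = M y" using injL minvl by simp
  qed
  have LM: "L (M y) = y" for y using surjL invL by (metis surj_f_inv_f)
  define G where "G z = M (F z - F 0)" for z
  define DG where "DG z = (\<lambda>x. M (DF z x))" for z
  have blM: "bounded_linear M" using linM by (simp add: linear_conv_bounded_linear)
  have Gd: "(G has_derivative DG z) (at z)" for z
  proof -
    have "((\<lambda>z. F z - F 0) has_derivative (\<lambda>x. DF z x - 0)) (at z)"
      by (intro has_derivative_diff Fd has_derivative_const)
    then show ?thesis unfolding G_def[abs_def] DG_def
      using has_derivative_compose[OF _ bounded_linear_imp_has_derivative[OF blM]] by simp
  qed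
  have clG: "complex_linear (DG z)" for z
    using clF[of z] clM linM unfolding complex_linear_def DG_def
    by (auto intro: linear_compose[unfolded o_def])
  have DG0: "DG 0 = (\<lambda>x. x)" unfolding DG_def L_def[symmetric] using minvl by simp
  have G0: "G 0 = 0" unfolding G_def using linM by (simp add: linear_0)
  have injM: "inj M" by (metis LM injI)
  have injG: "inj G"
  proof (rule injI)
    fix x y assume "G x = G y"
    then have "F x - F 0 = F y - F 0" unfolding G_def using injM by (meson injD)
    then show "x = y" using bijF by (simp add: bij_def inj_eq)
  qed
  have contI: "continuous_on UNIV (inv F)"
  proof -
    have "isCont (inv F) y" for y
    proof -
      obtain D where "(inv F has_derivative D) (at y)" using hI unfolding holomorphic_vec_on_def by blast
      then show ?thesis by (rule has_derivative_continuous)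
    qed
    then show ?thesis by (simp add: continuous_at_imp_continuous_on)
  qed
  have bdd: "bounded (G -` K)" if cK: "compact K" for K
  proof -
    have cL: "continuous_on UNIV (\<lambda>y. L y + F 0)"
      using linL by (intro continuous_intros) (simp add: linear_continuous_on linear_conv_bounded_linear)
    have c1: "compact ((\<lambda>y. L y + F 0) ` K)"
      by (rule compact_continuous_image[OF continuous_on_subset[OF cL subset_UNIV] cK])
    have c2: "compact (inv F ` ((\<lambda>y. L y + F 0) ` K))"
      by (rule compact_continuous_image[OF continuous_on_subset[OF contI subset_UNIV] c1])
    have "G -` K \<subseteq> inv F ` ((\<lambda>y. L y + F 0) ` K)"
    proof
      fix z assume "z \<in> G -` K"
      then have "G z \<in> K" by simp
      moreover have "F z = L (G z) + F 0" unfolding G_def LM by simp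
      ultimately show "z \<in> inv F ` ((\<lambda>y. L y + F 0) ` K)"
        using invFF by (metis image_eqI)
    qed
    then show ?thesis using compact_imp_bounded[OF c2] bounded_subset by blast
  qed
  have geq: "(\<lambda>z. ln (norm (inv (frechet_derivative F (at 0)) (F z - F 0)) / norm z))
      = (\<lambda>z. ln (norm (G z) / norm z))"
    unfolding G_def invL[symmetric] L_def DF_def ..
  show ?thesis unfolding geq
  proof
    assume aff: "\<forall>z. F z = F 0 + frechet_derivative F (at 0) z"
    have "G z = z" for z unfolding G_def using aff minvl unfolding L_def DF_def by (metis add_diff_cancel_left')
    then have "(\<lambda>z. ln (norm (G z) / norm z)) = (\<lambda>z. 0)"
      by (auto intro!: ext simp: divide_self_if)
    then show "pluriharmonic_on (UNIV - {0}) (\<lambda>z. ln (norm (G z) / norm z))"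
      using pluri_zero by simp
  next
    assume ph: "pluriharmonic_on (UNIV - {0}) (\<lambda>z. ln (norm (G z) / norm z))"
    have "G v = v" for v by (rule main_G[OF Gd clG DG0 G0 injG bdd ph])
    then have "F z - F 0 = L z" for z using LM unfolding G_def by metis
    then show "\<forall>z. F z = F 0 + frechet_derivative F (at 0) z"
      unfolding L_def DF_def by (metis add.commute diff_add_cancel)
  qed
qed

end
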